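(* Let $X$ be a normal space and let $\mathfrak{P}$ be realcompactness. Then $\lambda_\mathfrak{P}X=\beta X\setminus\mathrm{cl}_{\beta X}(\upsilon X\setminus X)$.
   Context: All spaces are completely regular Hausdorff. $\beta X$ is the Stone–Čech compactification and $\upsilon X\subseteq\beta X$ the Hewitt realcompactification of $X$. A space is realcompact if it is homeomorphic to a closed subspace of a power of $\mathbb{R}$. $\mathrm{Coz}(X)$ is the set of cozero-sets $X\setminus f^{-1}(0)$, $f:X\to[0,1]$ continuous. For a topological property $\mathfrak{P}$, $\lambda_\mathfrak{P}X=\bigcup\{\mathrm{int}_{\beta X}\mathrm{cl}_{\beta X}C: C\in\mathrm{Coz}(X),\ \mathrm{cl}_XC\text{ has }\mathfrak{P}\}$. *)

theory Defs
  imports "HOL-Analysis.Analysis"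
begin

definition cozero_sets :: "'a topology \<Rightarrow> 'a set set" where
  "cozero_sets X = {{x \<in> topspace X. f x \<noteq> 0} | f.
      continuous_map X (top_of_set {0..1::real}) f}"

text \<open>Realcompact: homeomorphic to a closed subspace of a power of the reals.
  The index set is taken inside the type 'a \<Rightarrow> real, which is large enough
  (|C(X)| \<le> |'a \<Rightarrow> real|).\<close>
definition realcompact_space :: "'a topology \<Rightarrow> bool" where
  "realcompact_space X \<longleftrightarrow>
     (\<exists>(I :: ('a \<Rightarrow> real) set) f.
        embedding_map X (product_topology (\<lambda>i. euclideanreal) I) f \<and>
        closedin (product_topology (\<lambda>i. euclideanreal) I) (f ` topspace X))"

definition stone_cech :: "'a topology \<Rightarrow> 'b topology \<Rightarrow> ('a \<Rightarrow> 'b) \<Rightarrow> bool" where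
  "stone_cech X B e \<longleftrightarrow>
     compact_space B \<and> Hausdorff_space B \<and> embedding_map X B e \<and>
     B closure_of (e ` topspace X) = topspace B \<and>
     (\<forall>f. continuous_map X (top_of_set {0..1::real}) f \<longrightarrow>
        (\<exists>g. continuous_map B (top_of_set {0..1::real}) g \<and>
             (\<forall>x\<in>topspace X. g (e x) = f x)))"

definition hewitt :: "'a topology \<Rightarrow> 'b topology \<Rightarrow> ('a \<Rightarrow> 'b) \<Rightarrow> 'b set" where
  "hewitt X B e = {p \<in> topspace B. \<forall>f. continuous_map X euclideanreal f \<longrightarrow>
      (\<exists>g. continuous_map (subtopology B (insert p (e ` topspace X))) euclideanreal g \<and>
           (\<forall>x\<in>topspace X. g (e x) = f x))}"

definition lambda_realcompact :: "'a topology \<Rightarrow> 'b topology \<Rightarrow> ('a \<Rightarrow> 'b) \<Rightarrow> 'b set" where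
  "lambda_realcompact X B e = \<Union>{B interior_of (B closure_of (e ` C)) | C.
      C \<in> cozero_sets X \<and> realcompact_space (subtopology X (X closure_of C))}"

end

theory Submission
  imports Defs
begin


lemma closure_pres:
  assumes "x \<in> X closure_of S" "continuous_map X Y f" "closedin Y T" "\<And>y. y\<in>S \<Longrightarrow> f y \<in> T"
  shows "f x \<in> T"
proof -
  have "f ` (X closure_of S) \<subseteq> Y closure_of (f`S)" by (rule continuous_map_image_closure_subset[OF assms(2)])
  also have "\<dots> \<subseteq> T" using assms(3,4) by (intro closure_of_minimal) auto
  finally show ?thesis using assms(1) by auto
qed

lemma embedding_map_subtop:
  assumes "embedding_map X Y f" "S \<subseteq> topspace X"
  shows "embedding_map (subtopology X S) Y f"
proof -
  have h: "homeomorphic_map X (subtopology Y (f ` topspace X)) f" using assms(1) by (simp add: embedding_map_def)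
  have fY: "f ` topspace X \<subseteq> topspace Y"
    using h by (metis continuous_map_image_subset_topspace homeomorphic_imp_continuous_map le_inf_iff topspace_subtopology)
  have "f ` (topspace X \<inter> S) = topspace (subtopology Y (f ` topspace X)) \<inter> f ` S"
    using fY assms(2) by auto
  from homeomorphic_map_subtopologies[OF h this]
  have "homeomorphic_map (subtopology X S) (subtopology (subtopology Y (f ` topspace X)) (f ` S)) f" .
  moreover have "subtopology (subtopology Y (f ` topspace X)) (f ` S) = subtopology Y (f ` S)"
    using assms(2) by (simp add: subtopology_subtopology inf.absorb2 image_mono)
  ultimately show ?thesis using assms(2) by (simp add: embedding_map_def inf.absorb2)
qed

lemma stone_cech_basic:
  assumes "stone_cech X B e"
  shows "continuous_map X B e" "inj_on e (topspace X)" "e ` topspace X \<subseteq> topspace B"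
proof -
  have "homeomorphic_map X (subtopology B (e ` topspace X)) e" using assms by (simp add: stone_cech_def embedding_map_def)
  then show "continuous_map X B e" "inj_on e (topspace X)"
    by (auto simp: homeomorphic_eq_everything_map continuous_map_in_subtopology)
  then show "e ` topspace X \<subseteq> topspace B" using continuous_map_image_subset_topspace by blast
qed

lemma dir1:
  fixes X :: "'a topology" and B :: "'b topology"
  assumes sc: "stone_cech X B e" and nX: "normal_space X"
    and CX: "C \<subseteq> topspace X"
    and rc: "realcompact_space (subtopology X (X closure_of C))"
    and pU: "p \<in> B closure_of (e ` C)"
    and pH: "p \<in> hewitt X B e"
  shows "p \<in> e ` topspace X"
proof -
  note eb = stone_cech_basic[OF sc]
  have HB: "Hausdorff_space B" using sc by (simp add: stone_cech_def)
  define Y where "Y = X closure_of C"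
  have YX: "Y \<subseteq> topspace X" by (simp add: Y_def closure_of_subset_topspace)
  have CY: "C \<subseteq> Y" using CX by (simp add: Y_def closure_of_subset)
  have cY: "closedin X Y" by (simp add: Y_def)
  have tY: "topspace (subtopology X Y) = Y" using YX by (simp add: inf.absorb2)
  obtain I :: "('a \<Rightarrow> real) set" and f where
     emb: "embedding_map (subtopology X Y) (product_topology (\<lambda>i. euclideanreal) I) f" and
     cl: "closedin (product_topology (\<lambda>i. euclideanreal) I) (f ` Y)"
    using rc unfolding realcompact_space_def Y_def[symmetric] tY by blast
  define P where "P = product_topology (\<lambda>i::'a\<Rightarrow>real. euclideanreal) I"
  have hm: "homeomorphic_map (subtopology X Y) (subtopology P (f ` Y)) f"
    using emb tY by (simp add: embedding_map_def P_def)
  then obtain f' where hms: "homeomorphic_maps (subtopology X Y) (subtopology P (f ` Y)) f f'"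
    using homeomorphic_map_maps by blast
  have cf: "continuous_map (subtopology X Y) P f"
    using hm homeomorphic_imp_continuous_map continuous_map_in_subtopology by blast
  have cf': "continuous_map (subtopology P (f ` Y)) (subtopology X Y) f'"
    and f'f: "\<And>y. y \<in> Y \<Longrightarrow> f' (f y) = y"
    using hms tY by (auto simp: homeomorphic_maps_def)
  have fP: "f y \<in> topspace P" if "y \<in> Y" for y
    using continuous_map_image_subset_topspace[OF cf] that tY by auto
  have ci: "continuous_map (subtopology X Y) euclideanreal (\<lambda>y. f y i)" if "i \<in> I" for i
    using cf that unfolding P_def continuous_map_componentwise by auto
  define S where "S = subtopology B (insert p (e ` topspace X))"
  have ex: "\<forall>i\<in>I. \<exists>g. continuous_map S euclideanreal g \<and> (\<forall>y\<in>Y. g (e y) = f y i)"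
  proof
    fix i assume "i \<in> I"
    obtain F where F: "continuous_map X euclideanreal F" "\<And>x. x \<in> Y \<Longrightarrow> F x = f x i"
      using Tietze_extension_realinterval[OF nX cY, of UNIV "\<lambda>y. f y i"] ci[OF \<open>i \<in> I\<close>] by auto
    then obtain g where "continuous_map S euclideanreal g" "\<forall>x\<in>topspace X. g (e x) = F x"
      using pH unfolding hewitt_def S_def by blast
    then show "\<exists>g. continuous_map S euclideanreal g \<and> (\<forall>y\<in>Y. g (e y) = f y i)"
      using F YX by (metis subsetD)
  qed
  then obtain g where g: "\<And>i. i \<in> I \<Longrightarrow> continuous_map S euclideanreal (g i)"
     "\<And>i y. i \<in> I \<Longrightarrow> y \<in> Y \<Longrightarrow> g i (e y) = f y i"
    by metis
  define G where "G t = restrict (\<lambda>i. g i t) I" for t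
  define S' where "S' = subtopology B (insert p (e ` Y))"
  have S'S: "S' = subtopology S (insert p (e ` Y))"
    unfolding S'_def S_def subtopology_subtopology using YX by (metis image_mono inf.absorb2 insert_mono)
  have cG: "continuous_map S' P G"
    unfolding P_def continuous_map_componentwise
  proof
    show "G ` topspace S' \<subseteq> extensional I" by (auto simp: G_def)
    show "\<forall>k\<in>I. continuous_map S' euclideanreal (\<lambda>x. G x k)"
      using g(1) unfolding S'S G_def by (auto intro: continuous_map_from_subtopology)
  qed
  have Gey: "G (e y) = f y" if "y \<in> Y" for y
  proof -
    have "f y \<in> extensional I" using fP[OF that] by (simp add: P_def PiE_iff)
    then show ?thesis using g(2) that by (auto simp: G_def extensional_def)
  qed
  have pB: "p \<in> topspace B" using pH by (simp add: hewitt_def)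
  have pcl: "p \<in> S' closure_of (e ` C)"
  proof -
    have "insert p (e ` Y) \<inter> e ` C = e ` C" using CY by auto
    then show ?thesis using pU unfolding S'_def closure_of_subtopology by simp
  qed
  have Gp: "G p \<in> f ` Y"
    by (rule closure_pres[OF pcl cG cl[folded P_def]]) (use CY Gey in auto)
  have GS': "G \<in> topspace S' \<rightarrow> f ` Y"
    using Gp Gey by (auto simp: S'_def)
  have cG': "continuous_map S' (subtopology P (f ` Y)) G"
    using cG GS' by (simp add: continuous_map_in_subtopology)
  have cK: "continuous_map S' B (e \<circ> f' \<circ> G)"
    by (rule continuous_map_compose[OF cG' continuous_map_compose[OF cf' continuous_map_from_subtopology[OF eb(1)]]])
  have cid: "continuous_map S' B id"
    unfolding S'_def by (intro continuous_map_from_subtopology continuous_map_id)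
  have "(e \<circ> f' \<circ> G) p = id p"
    by (rule forall_in_closure_of_eq[OF pcl HB cK cid]) (use CY Gey f'f in auto)
  moreover obtain y0 where "y0 \<in> Y" "G p = f y0" using Gp by auto
  ultimately show ?thesis using f'f YX by force
qed



lemma embed_C:
  assumes "completely_regular_space X" "Hausdorff_space X"
  shows "embedding_map X (product_topology (\<lambda>i. euclideanreal) {g. continuous_map X euclideanreal g})
           (\<lambda>x. restrict (\<lambda>g. g x) {g. continuous_map X euclideanreal g})"
proof -
  define K where "K \<equiv> {g. continuous_map X euclideanreal g}"
  define e where "e \<equiv> \<lambda>x. \<lambda>f\<in>K. f x"
  have "e x \<noteq> e y" if xy: "x \<noteq> y" "x \<in> topspace X" "y \<in> topspace X" for x y
  proof -
    have "closedin X {x}"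
      by (simp add: \<open>Hausdorff_space X\<close> closedin_Hausdorff_singleton \<open>x \<in> topspace X\<close>)
    moreover have "y \<in> topspace X - {x}" using xy by auto
    ultimately obtain f where f1: "continuous_map X (top_of_set {0..1::real}) f" and fxy0: "f y = 0" "f ` {x} \<subseteq> {1}"
      using \<open>completely_regular_space X\<close> unfolding completely_regular_space_def by blast
    then have contf: "continuous_map X euclideanreal f" and fxy: "f y = 0" "f x = 1"
      by (auto simp: continuous_map_in_subtopology)
    then have "f \<in> K" by (simp add: K_def)
    with fxy xy show ?thesis 
      unfolding e_def by (metis restrict_apply' zero_neq_one)
  qed
  then have "inj_on e (topspace X)"
    by (meson inj_onI)
  then obtain e' where e': "\<And>x. x \<in> topspace X \<Longrightarrow> e' (e x) = x"
    by (metis inv_into_f_f)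
  have "continuous_map (subtopology (product_topology (\<lambda>f. euclideanreal) K) (e ` topspace X)) X e'"
  proof (clarsimp simp add: continuous_map_atin limitin_atin openin_subtopology_alt e')
    fix x U
    assume "x \<in> topspace X" and "openin X U" and "x \<in> U"
    moreover have "closedin X (topspace X - U)" using \<open>openin X U\<close> by (simp add: closedin_diff)
    moreover have "x \<in> topspace X - (topspace X - U)" using \<open>x \<in> U\<close> \<open>x \<in> topspace X\<close> by blast
    ultimately obtain g where contg: "continuous_map X (top_of_set {0..1::real}) g" and "g x = 0" 
          and gim0: "g ` (topspace X - U) \<subseteq> {1::real}"
      using \<open>completely_regular_space X\<close> unfolding completely_regular_space_def by blast
    then have gim: "g \<in> (topspace X - U) \<rightarrow> {1::real}" by (simp add: image_subset_iff_funcset)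
    have g_in_K: "g \<in> K"
      using contg by (simp add: K_def continuous_map_in_subtopology)
    have ex: "e x \<in> (\<Pi>\<^sub>E f\<in>K. if f = g then {..<1} else UNIV)"
      by (simp add: e_def \<open>g x = 0\<close> PiE_iff)
    have ey1: "e y = e x"
      if "y \<notin> U" and ey: "e y \<in> (\<Pi>\<^sub>E f\<in>K. if f = g then {..<1} else UNIV)"
           and y: "y \<in> topspace X" for y
    proof -
      have "e y g \<in> {..<1}"
        using PiE_mem[OF ey g_in_K] by simp
      moreover have "g y = 1" using gim y \<open>y \<notin> U\<close> by auto
      moreover have "e y g = g y" using g_in_K by (simp add: e_def)
      ultimately show ?thesis by simp
    qed
    define W where "W = PiE K (\<lambda>f. if f = g then {..<1::real} else UNIV)"
    have fin: "finite {i\<in>K. (if i = g then {..<1::real} else UNIV) \<noteq> topspace euclideanreal}"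
      by (rule finite_subset[of _ "{g}"]) auto
    have oW: "openin (product_topology (\<lambda>f. euclideanreal) K) W"
      unfolding W_def openin_PiE_gen using fin by auto
    have sub: "e' ` (e ` topspace X \<inter> W - {e x}) \<subseteq> U"
    proof
      fix z assume "z \<in> e' ` (e ` topspace X \<inter> W - {e x})"
      then obtain y where y: "y \<in> topspace X" "e y \<in> W" "e y \<noteq> e x" "z = e' (e y)" by auto
      then have "y \<in> U" using ey1 unfolding W_def by blast
      then show "z \<in> U" using y e' by simp
    qed
    show "\<exists>W. openin (product_topology (\<lambda>f. euclideanreal) K) W \<and> e x \<in> W \<and> e' ` (e ` topspace X \<inter> W - {e x}) \<subseteq> U"
      using oW sub ex unfolding W_def by blast
  qed
  moreover have "continuous_map X (product_topology (\<lambda>f. euclideanreal) K) e"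
    unfolding continuous_map_componentwise
  proof
    show "e ` topspace X \<subseteq> extensional K" by (auto simp: e_def)
    show "\<forall>k\<in>K. continuous_map X euclideanreal (\<lambda>x. e x k)"
      by (simp add: e_def K_def)
  qed
  ultimately have "homeomorphic_maps X (subtopology (product_topology (\<lambda>f. euclideanreal) K) (e ` topspace X)) e e'"
    unfolding homeomorphic_maps_def using e'
    by (auto simp: continuous_map_in_subtopology)
  then have "embedding_map X (product_topology (\<lambda>f. euclideanreal) K) e"
    unfolding embedding_map_def homeomorphic_map_maps by blast
  then show ?thesis
    by (simp add: K_def e_def)
qed



definition phi0 :: "real \<Rightarrow> real" where "phi0 t = arctan t / pi + 1/2"
definition phinv0 :: "real \<Rightarrow> real" where "phinv0 s = tan (pi * s - pi/2)"

lemma phi0_range: "phi0 t \<in> {0<..<1}"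
proof -
  have "- (pi/2) < arctan t" "arctan t < pi/2" by (rule arctan_lbound, rule arctan_ubound)
  then show ?thesis using pi_gt_zero unfolding phi0_def by (auto simp: field_simps)
qed

lemma phinv0_phi0: "phinv0 (phi0 t) = t"
  unfolding phinv0_def phi0_def by (simp add: algebra_simps tan_arctan)

lemma phi0_inj: "phi0 s = phi0 t \<longleftrightarrow> s = t"
  by (metis phinv0_phi0)

lemma cont_phi0: "continuous_on UNIV phi0"
  unfolding phi0_def by (intro continuous_intros) auto

lemma cont_phinv0: "continuous_on {0<..<1} phinv0"
  unfolding phinv0_def
proof (intro continuous_intros ballI)
  fix x :: real assume "x \<in> {0<..<1}"
  then have "- (pi/2) < pi * x - pi/2" "pi * x - pi/2 < pi/2" using pi_gt_zero by auto
  then have "0 < cos (pi * x - pi / 2)" by (rule cos_gt_zero_pi)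
  then show "cos (pi * x - pi / 2) \<noteq> 0" by simp
qed

lemma cmap_phi0: "continuous_map euclideanreal euclideanreal phi0"
  using cont_phi0 by simp

lemma cmap_phinv0: "continuous_map (top_of_set {0<..<1}) euclideanreal phinv0"
  using cont_phinv0 by simp

lemma eq_by_eps:
  fixes a b :: real
  assumes "\<And>\<epsilon>. \<epsilon> > 0 \<Longrightarrow> \<bar>a - b\<bar> \<le> \<epsilon>"
  shows "a = b"
proof (rule ccontr)
  assume "a \<noteq> b"
  then have "\<bar>a - b\<bar> > 0" by simp
  from assms[of "\<bar>a - b\<bar>/2"] this show False by simp
qed



lemma dir2_realcompact:
  fixes X :: "'a topology" and B :: "'b topology"
  assumes sc: "stone_cech X B e" and crX: "completely_regular_space X" and HX: "Hausdorff_space X"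
    and Y: "closedin X Y"
    and good: "\<And>b. b \<in> B closure_of (e ` Y) \<Longrightarrow> b \<in> hewitt X B e \<Longrightarrow> b \<in> e ` topspace X"
  shows "realcompact_space (subtopology X Y)"
proof -
  note eb = stone_cech_basic[OF sc]
  have cB: "compact_space B" using sc by (simp add: stone_cech_def)
  have YX: "Y \<subseteq> topspace X" using Y closedin_subset by blast
  have tY: "topspace (subtopology X Y) = Y" using YX by (simp add: inf.absorb2)
  define I where "I = {g. continuous_map X euclideanreal g}"
  define P where "P = product_topology (\<lambda>i::'a\<Rightarrow>real. euclideanreal) I"
  define F where "F x = restrict (\<lambda>g. g x) I" for x
  have embX: "embedding_map X P F"
    using embed_C[OF crX HX] unfolding P_def F_def I_def .
  have embY: "embedding_map (subtopology X Y) P F"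
    by (rule embedding_map_subtop[OF embX YX])
  have FP: "F x \<in> topspace P" for x
    by (simp add: P_def F_def)
  have phiI: "phi0 \<circ> k \<in> I" if "k \<in> I" for k
    using that continuous_map_compose[OF _ cmap_phi0] by (simp add: I_def)
  have FI: "F y k = k y" if "k \<in> I" for y k using that by (simp add: F_def)
  have "P closure_of (F ` Y) \<subseteq> F ` Y"
  proof
    fix q assume qcl: "q \<in> P closure_of (F ` Y)"
    have qP: "q \<in> topspace P" using closure_of_subset_topspace[of P "F ` Y"] qcl by blast
    have qext: "q \<in> extensional I" using qP by (simp add: P_def PiE_iff)
    have proj: "continuous_map P euclideanreal (\<lambda>z. z k)" if "k \<in> I" for k
      unfolding P_def using that by (rule continuous_map_product_projection)
    have qphi: "q (phi0 \<circ> k) = phi0 (q k)" if kI: "k \<in> I" for k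
    proof -
      have c: "continuous_map P euclideanreal (\<lambda>z. z (phi0 \<circ> k) - phi0 (z k))"
        by (intro continuous_map_diff proj phiI kI continuous_map_compose[OF proj[OF kI] cmap_phi0, unfolded o_def])
      have "(\<lambda>z. z (phi0 \<circ> k) - phi0 (z k)) q \<in> {0}"
        by (rule closure_pres[OF qcl c]) (auto simp: FI[OF phiI[OF kI]] FI[OF kI])
      then show ?thesis by simp
    qed
    define N where "N J \<epsilon> = {y \<in> Y. \<forall>j\<in>J. \<bar>j y - q j\<bar> < \<epsilon>}" for J \<epsilon>
    have Nne: "N J \<epsilon> \<noteq> {}" if J: "finite J" "J \<subseteq> I" and \<epsilon>: "\<epsilon> > 0" for J \<epsilon>
    proof -
      define W where "W = PiE I (\<lambda>i. if i \<in> J then ball (q i) \<epsilon> else UNIV)"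
      have fin: "finite {i\<in>I. (if i \<in> J then ball (q i) \<epsilon> else UNIV) \<noteq> topspace euclideanreal}"
        by (rule finite_subset[OF _ J(1)]) auto
      have oW: "openin P W" unfolding W_def P_def openin_PiE_gen using fin by auto
      have qW: "q \<in> W" using qext \<epsilon> by (auto simp: W_def PiE_iff)
      obtain z where "z \<in> F ` Y" "z \<in> W" using qcl oW qW unfolding in_closure_of by blast
      then obtain y where y: "y \<in> Y" "F y \<in> W" by auto
      have "y \<in> N J \<epsilon>"
      proof -
        have "\<bar>j y - q j\<bar> < \<epsilon>" if "j \<in> J" for j
        proof -
          have "F y j \<in> ball (q j) \<epsilon>" using y(2) that J(2) unfolding W_def PiE_iff by (metis subsetD)
          then show ?thesis using FI[of j y] that J(2) by (auto simp: dist_real_def abs_minus_commute)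
        qed
        then show ?thesis using y(1) by (simp add: N_def)
      qed
      then show ?thesis by blast
    qed
    define \<U> where "\<U> = {B closure_of (e ` N J \<epsilon>) | J \<epsilon>. finite J \<and> J \<subseteq> I \<and> \<epsilon> > 0}"
    have Nmono: "N (J \<union> J') (min \<epsilon> \<epsilon>') \<subseteq> N J \<epsilon> \<inter> N J' \<epsilon>'" for J J' \<epsilon> \<epsilon>'
      by (auto simp: N_def)
    have dir: "\<exists>J \<epsilon>. finite J \<and> J \<subseteq> I \<and> \<epsilon> > 0 \<and> (\<forall>A\<in>\<F>. B closure_of (e ` N J \<epsilon>) \<subseteq> A)"
      if "finite \<F>" "\<F> \<subseteq> \<U>" for \<F>
      using that
    proof (induction \<F> rule: finite_induct)
      case empty
      show ?case by (rule exI[of _ "{}"], rule exI[of _ 1]) auto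
    next
      case (insert A \<F>)
      then obtain J \<epsilon> where J: "finite J" "J \<subseteq> I" "\<epsilon> > 0" "\<forall>A\<in>\<F>. B closure_of (e ` N J \<epsilon>) \<subseteq> A"
        by auto
      from insert obtain J' \<epsilon>' where J': "finite J'" "J' \<subseteq> I" "\<epsilon>' > 0" "A = B closure_of (e ` N J' \<epsilon>')"
        by (auto simp: \<U>_def)
      have s1: "B closure_of (e ` N (J \<union> J') (min \<epsilon> \<epsilon>')) \<subseteq> B closure_of (e ` N J \<epsilon>)"
        and s2: "B closure_of (e ` N (J \<union> J') (min \<epsilon> \<epsilon>')) \<subseteq> B closure_of (e ` N J' \<epsilon>')"
        using Nmono by (meson closure_of_mono image_mono le_inf_iff)+
      have a1: "\<forall>a\<in>insert A \<F>. B closure_of (e ` N (J \<union> J') (min \<epsilon> \<epsilon>')) \<subseteq> a"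
      proof
        fix a assume "a \<in> insert A \<F>"
        then show "B closure_of (e ` N (J \<union> J') (min \<epsilon> \<epsilon>')) \<subseteq> a"
        proof
          assume "a = A" then show ?thesis using s2 J'(4) by simp
        next
          assume "a \<in> \<F>" then show ?thesis using s1 J(4) by blast
        qed
      qed
      have a2: "finite (J \<union> J')" "J \<union> J' \<subseteq> I" "0 < min \<epsilon> \<epsilon>'" using J J' by auto
      show ?case
        apply (rule exI[of _ "J \<union> J'"])
        apply (rule exI[of _ "min \<epsilon> \<epsilon>'"])
        using a1 a2 by blast
    qed
    have fip: "\<forall>\<U>. (\<forall>C\<in>\<U>. closedin B C) \<and> (\<forall>\<F>. finite \<F> \<and> \<F> \<subseteq> \<U> \<longrightarrow> \<Inter>\<F> \<noteq> {}) \<longrightarrow> \<Inter>\<U> \<noteq> {}"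
      using cB unfolding compact_space_fip .
    have Ucl: "\<forall>C\<in>\<U>. closedin B C"
    proof
      fix C assume "C \<in> \<U>"
      then obtain J \<epsilon> where "C = B closure_of (e ` N J \<epsilon>)" unfolding \<U>_def by blast
      then show "closedin B C" by simp
    qed
    have Ufip: "\<forall>\<F>. finite \<F> \<and> \<F> \<subseteq> \<U> \<longrightarrow> \<Inter>\<F> \<noteq> {}"
    proof (intro allI impI)
      fix \<F> assume F: "finite \<F> \<and> \<F> \<subseteq> \<U>"
      have "\<exists>J \<epsilon>. finite J \<and> J \<subseteq> I \<and> \<epsilon> > 0 \<and> (\<forall>A\<in>\<F>. B closure_of (e ` N J \<epsilon>) \<subseteq> A)"
        using dir[OF conjunct1[OF F] conjunct2[OF F]] .
      then obtain J \<epsilon> where J: "finite J" "J \<subseteq> I" "\<epsilon> > 0" "\<forall>A\<in>\<F>. B closure_of (e ` N J \<epsilon>) \<subseteq> A"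
        by (elim exE conjE)
      have "e ` N J \<epsilon> \<subseteq> topspace B" using eb(3) YX by (auto simp: N_def)
      then have sub: "e ` N J \<epsilon> \<subseteq> B closure_of (e ` N J \<epsilon>)" by (rule closure_of_subset)
      obtain y where "y \<in> N J \<epsilon>" using Nne[OF J(1-3)] by blast
      then have z: "e y \<in> B closure_of (e ` N J \<epsilon>)" using sub by blast
      have "e y \<in> \<Inter>\<F>"
      proof
        fix A assume "A \<in> \<F>" then show "e y \<in> A" using z J(4) by blast
      qed
      then show "\<Inter>\<F> \<noteq> {}" by blast
    qed
    have "\<Inter>\<U> \<noteq> {}" using fip[rule_format, OF conjI[OF Ucl Ufip]] .
    then obtain b where bU: "b \<in> \<Inter>\<U>" by blast
    have bN: "b \<in> B closure_of (e ` N J \<epsilon>)" if "finite J" "J \<subseteq> I" "\<epsilon> > 0" for J \<epsilon>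
    proof -
      have "B closure_of (e ` N J \<epsilon>) \<in> \<U>" unfolding \<U>_def using that by blast
      then show ?thesis using bU by blast
    qed
    have N0: "N {} 1 = Y" by (simp add: N_def)
    have bY: "b \<in> B closure_of (e ` Y)" using bN[of "{}" 1] N0 by simp
    have bB: "b \<in> topspace B" using closure_of_subset_topspace[of B "e ` Y"] bY by blast
    have ext: "\<exists>kt. continuous_map B (top_of_set {0..1}) kt \<and> (\<forall>x\<in>topspace X. kt (e x) = phi0 (f x))
                 \<and> kt b = phi0 (q f)" if fI: "f \<in> I" for f
    proof -
      have c01: "continuous_map X (top_of_set {0..1::real}) (phi0 \<circ> f)"
        using phiI[OF fI] phi0_range by (auto simp: I_def continuous_map_in_subtopology less_imp_le)
      obtain kt where kt: "continuous_map B (top_of_set {0..1::real}) kt" "\<forall>x\<in>topspace X. kt (e x) = (phi0 \<circ> f) x"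
        using sc c01 unfolding stone_cech_def by blast
      have ktr: "continuous_map B euclideanreal kt" using kt(1) by (simp add: continuous_map_in_subtopology)
      have "\<bar>kt b - q (phi0 \<circ> f)\<bar> \<le> \<epsilon>" if "\<epsilon> > 0" for \<epsilon>
      proof -
        have "kt b \<in> cball (q (phi0 \<circ> f)) \<epsilon>"
        proof (rule closure_pres[OF bN[of "{phi0 \<circ> f}" \<epsilon>] ktr])
          show "finite {phi0 \<circ> f}" "{phi0 \<circ> f} \<subseteq> I" "\<epsilon> > 0" using phiI[OF fI] that by auto
          show "closedin euclideanreal (cball (q (phi0 \<circ> f)) \<epsilon>)" by simp
          fix z assume "z \<in> e ` N {phi0 \<circ> f} \<epsilon>"
          then obtain y where y: "y \<in> Y" "\<bar>(phi0 \<circ> f) y - q (phi0 \<circ> f)\<bar> < \<epsilon>" "z = e y"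
            by (auto simp: N_def)
          then have "kt z = (phi0 \<circ> f) y" using kt(2) YX by auto
          then show "kt z \<in> cball (q (phi0 \<circ> f)) \<epsilon>" using y(2) by (simp add: dist_real_def abs_minus_commute)
        qed
        then show ?thesis by (simp add: dist_real_def abs_minus_commute)
      qed
      then have "kt b = q (phi0 \<circ> f)" by (rule eq_by_eps)
      then show ?thesis using kt qphi[OF fI] by auto
    qed
    have bH: "b \<in> hewitt X B e"
      unfolding hewitt_def
    proof (intro CollectI conjI allI impI bB)
      fix f assume cf: "continuous_map X euclideanreal f"
      then have fI: "f \<in> I" by (simp add: I_def)
      obtain kt where kt: "continuous_map B (top_of_set {0..1}) kt" "\<forall>x\<in>topspace X. kt (e x) = phi0 (f x)"
        "kt b = phi0 (q f)" using ext[OF fI] by blast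
      define S where "S = subtopology B (insert b (e ` topspace X))"
      have "continuous_map S (top_of_set {0<..<1}) kt"
        unfolding S_def continuous_map_in_subtopology
      proof
        show "continuous_map (subtopology B (insert b (e ` topspace X))) euclideanreal kt"
          using kt(1) by (simp add: continuous_map_in_subtopology continuous_map_from_subtopology)
        show "kt \<in> topspace (subtopology B (insert b (e ` topspace X))) \<rightarrow> {0<..<1}"
          using kt(2,3) phi0_range by auto
      qed
      then have "continuous_map S euclideanreal (phinv0 \<circ> kt)"
        using cmap_phinv0 by (rule continuous_map_compose)
      moreover have "\<forall>x\<in>topspace X. (phinv0 \<circ> kt) (e x) = f x"
        using kt(2) by (simp add: phinv0_phi0)
      ultimately show "\<exists>g. continuous_map (subtopology B (insert b (e ` topspace X))) euclideanreal g \<and>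
           (\<forall>x\<in>topspace X. g (e x) = f x)" unfolding S_def by blast
    qed
    obtain x0 where x0: "x0 \<in> topspace X" "b = e x0" using good[OF bY bH] by blast
    have qx0: "q f = f x0" if fI: "f \<in> I" for f
    proof -
      obtain kt where kt: "\<forall>x\<in>topspace X. kt (e x) = phi0 (f x)" "kt b = phi0 (q f)"
        using ext[OF fI] by blast
      then show ?thesis using x0 phi0_inj by metis
    qed
    have x0Y: "x0 \<in> Y"
    proof (rule ccontr)
      assume "x0 \<notin> Y"
      then obtain k where k: "continuous_map X (top_of_set {0..1::real}) k" "k x0 = 0" "k ` Y \<subseteq> {1}"
        using crX Y x0(1) unfolding completely_regular_space_def by blast
      then have kI: "k \<in> I" by (simp add: I_def continuous_map_in_subtopology)
      have "q k \<in> {1}"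
        by (rule closure_pres[OF qcl proj[OF kI]]) (use k(3) FI[OF kI] in auto)
      then show False using qx0[OF kI] k(2) by simp
    qed
    have "q = F x0"
    proof
      fix i show "q i = F x0 i"
      proof (cases "i \<in> I")
        case True then show ?thesis using qx0 FI by simp
      next
        case False then show ?thesis using qext by (simp add: F_def extensional_def)
      qed
    qed
    then show "q \<in> F ` Y" using x0Y by blast
  qed
  then have "closedin P (F ` Y)"
    using FP closure_of_subset_eq by blast
  then have cl: "closedin (product_topology (\<lambda>i::'a\<Rightarrow>real. euclideanreal) I) (F ` topspace (subtopology X Y))"
    using tY by (simp add: P_def)
  show ?thesis
    unfolding realcompact_space_def
    apply (rule exI[of _ I], rule exI[of _ F])
    using embY cl by (simp add: P_def)
qed


theorem proposition4p31:
  fixes X :: "'a topology" and B :: "'b topology" and e :: "'a \<Rightarrow> 'b"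
  assumes "completely_regular_space X" and "Hausdorff_space X"
    and "normal_space X"
    and "stone_cech X B e"
  shows "lambda_realcompact X B e =
           topspace B - B closure_of (hewitt X B e - e ` topspace X)"
proof -
  note sc = assms(4)
  note eb = stone_cech_basic[OF sc]
  have cB: "compact_space B" and HB: "Hausdorff_space B"
    and dense: "B closure_of (e ` topspace X) = topspace B"
    using sc unfolding stone_cech_def by blast+
  have HsB: "hewitt X B e \<subseteq> topspace B" by (auto simp: hewitt_def)
  show ?thesis
  proof
    show "lambda_realcompact X B e \<subseteq> topspace B - B closure_of (hewitt X B e - e ` topspace X)"
    proof
      fix p assume "p \<in> lambda_realcompact X B e"
      then obtain A where A: "A \<in> {B interior_of (B closure_of (e ` C)) | C.
          C \<in> cozero_sets X \<and> realcompact_space (subtopology X (X closure_of C))}" and pA: "p \<in> A"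
        unfolding lambda_realcompact_def by (rule UnionE)
      from A have "\<exists>C. A = B interior_of (B closure_of (e ` C)) \<and>
          C \<in> cozero_sets X \<and> realcompact_space (subtopology X (X closure_of C))"
        by (simp only: mem_Collect_eq)
      then obtain C where AC: "A = B interior_of (B closure_of (e ` C))" and
          Ccz: "C \<in> cozero_sets X" and rc: "realcompact_space (subtopology X (X closure_of C))"
        by (elim exE conjE)
      have pC: "p \<in> B interior_of (B closure_of (e ` C))" using pA AC by simp
      have CX: "C \<subseteq> topspace X"
      proof -
        from Ccz have "\<exists>f. C = {x \<in> topspace X. f x \<noteq> 0} \<and> continuous_map X (top_of_set {0..1::real}) f"
          unfolding cozero_sets_def by (simp only: mem_Collect_eq)
        then obtain f :: "'a \<Rightarrow> real" where "C = {x \<in> topspace X. f x \<noteq> 0}" by (elim exE conjE)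
        then show ?thesis by blast
      qed
      define U where "U = B interior_of (B closure_of (e ` C))"
      have oU: "openin B U" by (simp add: U_def)
      have pB: "p \<in> topspace B" by (rule subsetD[OF interior_of_subset_topspace pC])
      have "p \<notin> B closure_of (hewitt X B e - e ` topspace X)"
      proof
        assume "p \<in> B closure_of (hewitt X B e - e ` topspace X)"
        then have "\<forall>T. p \<in> T \<and> openin B T \<longrightarrow> (\<exists>y. y \<in> hewitt X B e - e ` topspace X \<and> y \<in> T)"
          unfolding in_closure_of by (rule conjunct2)
        then have "\<exists>y. y \<in> hewitt X B e - e ` topspace X \<and> y \<in> U"
          using oU pC unfolding U_def by blast
        then obtain y where y: "y \<in> hewitt X B e - e ` topspace X" "y \<in> U"
          by (elim exE conjE)
        have "y \<in> B closure_of (e ` C)" using y(2) unfolding U_def by (rule subsetD[OF interior_of_subset])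
        moreover have "y \<in> hewitt X B e" using y(1) by (rule DiffD1)
        ultimately have "y \<in> e ` topspace X"
          by (rule dir1[OF sc assms(3) CX rc])
        then show False using y(1) by simp
      qed
      then show "p \<in> topspace B - B closure_of (hewitt X B e - e ` topspace X)" using pB by blast
    qed
  next
    show "topspace B - B closure_of (hewitt X B e - e ` topspace X) \<subseteq> lambda_realcompact X B e"
    proof
      fix p assume p: "p \<in> topspace B - B closure_of (hewitt X B e - e ` topspace X)"
      define Z where "Z = B closure_of (hewitt X B e - e ` topspace X)"
      have nB: "normal_space B"
        by (rule compact_Hausdorff_or_regular_imp_normal_space[OF cB]) (simp add: HB)
      have crB: "completely_regular_space B"
        by (rule normal_imp_completely_regular_space[OF nB]) (simp add: HB)
      have clZ: "closedin B Z" by (simp add: Z_def)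
      have pZ: "p \<in> topspace B - Z" using p by (simp add: Z_def)
      have "\<exists>h::'b\<Rightarrow>real. continuous_map B (top_of_set {0..1}) h \<and> h p = 0 \<and> h ` Z \<subseteq> {1}"
        using crB[unfolded completely_regular_space_def, rule_format, OF conjI[OF clZ pZ]] .
      then obtain h :: "'b \<Rightarrow> real" where h01: "continuous_map B (top_of_set {0..1::real}) h" and hp: "h p = 0"
          and hZ: "h ` Z \<subseteq> {1}"
        by (elim exE conjE)
      have hr: "continuous_map B euclideanreal h" using h01 by (simp add: continuous_map_in_subtopology)
      have hrange: "h b \<in> {0..1}" if "b \<in> topspace B" for b
        using continuous_map_image_subset_topspace[OF h01] that by auto
      have he: "continuous_map X euclideanreal (h \<circ> e)" by (rule continuous_map_compose[OF eb(1) hr])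
      define C where "C = {x \<in> topspace X. h (e x) < 1/2}"
      define f where "f x = max 0 (1/2 - h (e x))" for x
      have cf: "continuous_map X euclideanreal f"
      proof -
        have c1: "continuous_map X euclideanreal (\<lambda>x. h (e x))" using he by (simp add: o_def)
        have c2: "continuous_map X euclideanreal (\<lambda>x. 1/2 - h (e x))"
          by (rule continuous_map_diff[OF continuous_map_const[THEN iffD2] c1]) simp
        show ?thesis unfolding f_def
          by (rule continuous_map_real_max[OF continuous_map_const[THEN iffD2] c2]) simp
      qed
      have f01: "f x \<in> {0..1}" if "x \<in> topspace X" for x
        using hrange[of "e x"] eb(3) that by (auto simp: f_def)
      have "C = {x \<in> topspace X. f x \<noteq> 0}" by (auto simp: C_def f_def)
      moreover have cf01: "continuous_map X (top_of_set {0..1::real}) f"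
        using cf f01 by (auto simp: continuous_map_in_subtopology)
      moreover have "{x \<in> topspace X. f x \<noteq> 0} \<in> cozero_sets X"
        unfolding cozero_sets_def mem_Collect_eq by (rule exI[of _ f]) (simp add: cf01)
      ultimately have Ccz: "C \<in> cozero_sets X" by simp
      define Ob where "Ob = {b \<in> topspace B. h b \<in> {..<1/2}}"
      have oOb: "openin B Ob" unfolding Ob_def
        by (rule openin_continuous_map_preimage[OF hr]) (simp add: open_openin[symmetric])
      have pOb: "p \<in> Ob" using p hp by (simp add: Ob_def)
      have "Ob \<inter> e ` topspace X = e ` C" using eb(3) by (auto simp: Ob_def C_def)
      moreover have "Ob \<inter> B closure_of (e ` topspace X) \<subseteq> B closure_of (Ob \<inter> e ` topspace X)"
        by (rule openin_Int_closure_of_subset[OF oOb])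
      moreover have "Ob \<subseteq> topspace B" by (simp add: Ob_def)
      ultimately have "Ob \<subseteq> B closure_of (e ` C)" using dense by auto
      then have pint: "p \<in> B interior_of (B closure_of (e ` C))"
        using interior_of_maximal[OF _ oOb] pOb by blast
      define Y where "Y = X closure_of C"
      have Yle: "Y \<subseteq> {x \<in> topspace X. (h \<circ> e) x \<in> {..1/2}}"
      proof -
        have clh: "closedin X {x \<in> topspace X. (h \<circ> e) x \<in> {..1/2}}"
          by (rule closedin_continuous_map_preimage[OF he]) simp
        have "C \<subseteq> {x \<in> topspace X. (h \<circ> e) x \<in> {..1/2}}" by (auto simp: C_def)
        then show ?thesis unfolding Y_def using clh by (rule closure_of_minimal)
      qed
      have rc: "realcompact_space (subtopology X Y)"
      proof (rule dir2_realcompact[OF sc assms(1,2)])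
        show "closedin X Y" by (simp add: Y_def)
        fix b assume bY: "b \<in> B closure_of (e ` Y)" and bH: "b \<in> hewitt X B e"
        show "b \<in> e ` topspace X"
        proof (rule ccontr)
          assume "b \<notin> e ` topspace X"
          then have bd: "b \<in> hewitt X B e - e ` topspace X" using bH by blast
          have "hewitt X B e - e ` topspace X \<subseteq> B closure_of (hewitt X B e - e ` topspace X)"
            by (rule closure_of_subset) (use HsB in blast)
          then have "b \<in> Z" unfolding Z_def using bd by blast
          then have "h b = 1" using hZ by blast
          moreover have "h b \<in> {..1/2}"
          proof (rule closure_pres[OF bY hr])
            show "closedin euclideanreal {..1/2::real}" by simp
            fix z assume "z \<in> e ` Y"
            then obtain y where "y \<in> Y" "z = e y" by blast
            then show "h z \<in> {..1/2}" using Yle by auto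
          qed
          ultimately show False by simp
        qed
      qed
      have "B interior_of (B closure_of (e ` C)) \<in> {B interior_of (B closure_of (e ` C)) | C.
          C \<in> cozero_sets X \<and> realcompact_space (subtopology X (X closure_of C))}"
        unfolding mem_Collect_eq by (rule exI[of _ C]) (use Ccz rc in \<open>simp add: Y_def\<close>)
      then show "p \<in> lambda_realcompact X B e"
        unfolding lambda_realcompact_def using pint by (rule UnionI)
    qed
  qed
qed

end
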